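(* Let $f:\mathbb{R}^d\times\mathbb{R}^d\to\mathbb{R}^d$ be Borel measurable, $\phi:\mathbb{R}^d\to[0,\infty)$ a probability density with respect to Lebesgue measure, and $K(x,A)=\int_{\mathbb{R}^d}1_A(f(x,z))\phi(z)dz$. Let $R,M>0$ and $y_0\in\mathbb{R}^d$, and write $f_x=f(x,\cdot)$. Assume (i) there exists $L_f\ge0$ such that $f_x$ is $L_f$-Lipschitz for every $x\in B(0,R)$; (ii) there exists $\tilde M>0$ such that $B(y_0,M)\subset f_x(B(0,\tilde M))$ for all $x\in B(0,R)$; (iii) $\phi$ is lower semicontinuous and positive on $\mathbb{R}^d$. Then for all $x\in B(0,R)$ and all Borel $A\subset\mathbb{R}^d$, $$K(x,A)\ge L_f^{-d}\inf_{z\in B(0,\tilde M)}\{\phi(z)\}\,\mathrm{Leb}(A\cap B(y_0,M)).$$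
   Context: $B(x,r)$ denotes the Euclidean ball centered at $x$ of radius $r$, and $\mathrm{Leb}$ the Lebesgue measure on $\mathbb{R}^d$. *)

theory Defs
  imports "HOL-Analysis.Analysis"
begin

definition lsc :: "('a::topological_space \<Rightarrow> real) \<Rightarrow> bool" where
  "lsc g \<longleftrightarrow> (\<forall>x t. t < g x \<longrightarrow> (\<forall>\<^sub>F y in nhds x. t < g y))"

definition kernelK :: "('a::euclidean_space \<Rightarrow> 'a \<Rightarrow> 'a) \<Rightarrow> ('a \<Rightarrow> real) \<Rightarrow> 'a \<Rightarrow> 'a set \<Rightarrow> real" where
  "kernelK f \<phi> x A = (LINT z|lborel. indicator A (f x z) * \<phi> z)"

end

theory Submission
  imports Defs
begin

lemma emeasure_UN_countable_le:
  assumes sets[measurable]: "\<And>i. i \<in> I \<Longrightarrow> X i \<in> sets M" and I: "countable I"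
  shows "emeasure M (\<Union>(X ` I)) \<le> (\<integral>\<^sup>+i. emeasure M (X i) \<partial>count_space I)"
proof -
  have le: "indicator (\<Union>(X ` I)) x \<le> (\<integral>\<^sup>+i. indicator (X i) x \<partial>count_space I)" for x
  proof (cases "x \<in> \<Union>(X ` I)")
    case True
    then obtain j where j: "x \<in> X j" "j \<in> I" by auto
    have "(\<integral>\<^sup>+i. indicator {j} i \<partial>count_space I) \<le> (\<integral>\<^sup>+i. indicator (X i) x \<partial>count_space I)"
      by (rule nn_integral_mono) (use j in \<open>auto simp: indicator_def\<close>)
    moreover have "(\<integral>\<^sup>+i. indicator {j} i \<partial>count_space I) = (1::ennreal)"
      using j by (simp add: nn_integral_indicator)
    ultimately show ?thesis using True by simp
  qed simp
  note sets.countable_UN'[unfolded subset_eq, measurable]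
  have "emeasure M (\<Union>(X ` I)) = (\<integral>\<^sup>+x. indicator (\<Union>(X ` I)) x \<partial>M)"
    using I by simp
  also have "\<dots> \<le> (\<integral>\<^sup>+x. \<integral>\<^sup>+i. indicator (X i) x \<partial>count_space I \<partial>M)"
    by (rule nn_integral_mono) (rule le)
  also have "\<dots> = (\<integral>\<^sup>+i. \<integral>\<^sup>+x. indicator (X i) x \<partial>M \<partial>count_space I)"
    using I by (simp add: nn_integral_count_space_nn_integral)
  also have "\<dots> = (\<integral>\<^sup>+i. emeasure M (X i) \<partial>count_space I)"
    by (simp cong: nn_integral_cong_simp)
  finally show ?thesis .
qed

lemma emeasure_ball_content:
  fixes c :: "'a::euclidean_space"
  shows "emeasure lebesgue (ball c r) = ennreal (measure lborel (ball c r))"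
proof -
  have "emeasure lebesgue (ball c r) = emeasure lborel (ball c r)" by simp
  also have "\<dots> = ennreal (measure lborel (ball c r))"
    using emeasure_lborel_ball_finite[of c r] by (simp add: emeasure_eq_ennreal_measure)
  finally show ?thesis .
qed

lemma emeasure_ball_scale:
  fixes c d :: "'a::euclidean_space"
  assumes "r \<ge> 0" "L \<ge> 0"
  shows "emeasure lebesgue (ball d (L*r)) = ennreal (L^DIM('a)) * emeasure lebesgue (ball c r)"
proof -
  have "measure lborel (ball d (L*r)) = L^DIM('a) * measure lborel (ball c r)"
    using assms by (simp add: content_ball_conv_unit_ball[of "L*r"] content_ball_conv_unit_ball[of r] power_mult_distrib)
  then show ?thesis
    using assms by (simp add: emeasure_ball_content ennreal_mult)
qed

lemma lip_image_emeasure_eps: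
  fixes g :: "'a::euclidean_space \<Rightarrow> 'a"
  assumes L: "L > 0" and lip: "L-lipschitz_on UNIV g" and E: "E \<in> sets lebesgue"
    and B: "B \<subseteq> g ` E" and e: "e > 0"
  shows "emeasure lebesgue B \<le> ennreal (L^DIM('a)) * (emeasure lebesgue E + ennreal e)"
proof -
  obtain U where U: "open U" "E \<subseteq> U" "U - E \<in> lmeasurable" "emeasure lebesgue (U - E) < ennreal e"
    using sets_lebesgue_outer_open[OF E e] by blast
  have EU: "emeasure lebesgue U \<le> emeasure lebesgue E + ennreal e"
  proof -
    have "U = E \<union> (U - E)" using U by auto
    hence "emeasure lebesgue U \<le> emeasure lebesgue E + emeasure lebesgue (U - E)"
      by (metis emeasure_subadditive E fmeasurableD U(3))
    also have "\<dots> \<le> emeasure lebesgue E + ennreal e"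
      using U(4) by (simp add: add_left_mono less_imp_le)
    finally show ?thesis .
  qed
  define K where "K = {i :: 'a \<times> real. 0 < snd i \<and> ball (fst i) (snd i) \<subseteq> U}"
  have cov: "\<exists>i. i \<in> K \<and> x \<in> ball (fst i) (snd i) \<and> snd i < d" if "x \<in> E" "0 < d" for x d
  proof -
    have "x \<in> U" using U(2) that(1) by blast
    then obtain r where r: "r > 0" "ball x r \<subseteq> U"
      using U(1) open_contains_ball_eq by metis
    have sb: "ball x (min r d / 2) \<subseteq> ball x r"
      by (rule subset_ball) (use r(1) that(2) in linarith)
    have "(x, min r d / 2) \<in> K"
      unfolding K_def using r sb that(2) by simp
    moreover have "x \<in> ball x (min r d / 2)" using r(1) that(2) by simp
    moreover have "min r d / 2 < d" using r(1) that(2) by linarith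
    ultimately show ?thesis by (intro exI[of _ "(x, min r d / 2)"]) simp
  qed
  obtain C where C: "countable C" "C \<subseteq> K"
    and pw: "pairwise (\<lambda>i j. disjnt (ball (fst i) (snd i)) (ball (fst j) (snd j))) C"
    and neg: "negligible (E - (\<Union>i\<in>C. ball (fst i) (snd i)))"
    by (rule Vitali_covering_theorem_balls[of E K fst snd, OF cov])
  define N where "N = g ` (E - (\<Union>i\<in>C. ball (fst i) (snd i)))"
  have negN: "negligible N"
    unfolding N_def
  proof (rule negligible_locally_Lipschitz_image[OF order_refl neg])
    fix x
    have "norm (g y - g x) \<le> L * norm (y - x)" for y
      using lipschitz_on_normD[OF lip, of y x] by simp
    then show "\<exists>T B. open T \<and> x \<in> T \<and> (\<forall>y \<in> (E - (\<Union>i\<in>C. ball (fst i) (snd i))) \<inter> T. norm(g y - g x) \<le> B * norm(y - x))"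
      by (intro exI[of _ UNIV] exI[of _ L]) simp
  qed
  define X where "X i = ball (g (fst i)) (L * snd i)" for i
  have sub: "B \<subseteq> (\<Union>(X ` C)) \<union> N"
  proof
    fix y assume "y \<in> B"
    then obtain z where z: "z \<in> E" "y = g z" using B by auto
    show "y \<in> (\<Union>(X ` C)) \<union> N"
    proof (cases "z \<in> (\<Union>i\<in>C. ball (fst i) (snd i))")
      case True
      then obtain i where i: "i \<in> C" "z \<in> ball (fst i) (snd i)" by auto
      have "dist (g (fst i)) (g z) \<le> L * dist (fst i) z" using lipschitz_onD[OF lip] by auto
      also have "\<dots> < L * snd i" using i L by (simp add: mem_ball)
      finally have "y \<in> X i" using z by (simp add: X_def mem_ball)
      thus ?thesis using i by auto
    next
      case False thus ?thesis using z by (auto simp: N_def)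
    qed
  qed
  have Xs: "\<Union>(X ` C) \<in> sets lebesgue"
    using C by (auto intro!: sets.countable_UN' simp: X_def)
  have Ns: "N \<in> sets lebesgue" using negN by (rule negligible_imp_sets)
  have "emeasure lebesgue B \<le> emeasure lebesgue ((\<Union>(X ` C)) \<union> N)"
    by (rule emeasure_mono[OF sub]) (use Xs Ns in simp)
  also have "\<dots> \<le> emeasure lebesgue (\<Union>(X ` C)) + emeasure lebesgue N"
    by (rule emeasure_subadditive[OF Xs Ns])
  finally have b0: "emeasure lebesgue B \<le> emeasure lebesgue (\<Union>(X ` C)) + emeasure lebesgue N" .
  have N0: "emeasure lebesgue N = 0"
    using negN by (simp add: negligible_iff_null_sets null_sets_def)
  have b1: "emeasure lebesgue B \<le> emeasure lebesgue (\<Union>(X ` C))"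
    using b0 N0 by simp
  have "emeasure lebesgue (\<Union>(X ` C)) \<le> (\<integral>\<^sup>+i. emeasure lebesgue (X i) \<partial>count_space C)"
    by (rule emeasure_UN_countable_le) (auto simp: X_def C)
  also have "\<dots> = (\<integral>\<^sup>+i. ennreal (L^DIM('a)) * emeasure lebesgue (ball (fst i) (snd i)) \<partial>count_space C)"
  proof (rule nn_integral_cong)
    fix i assume "i \<in> space (count_space C)"
    then have r: "snd i > 0" using C K_def by auto
    show "emeasure lebesgue (X i) = ennreal (L^DIM('a)) * emeasure lebesgue (ball (fst i) (snd i))"
      unfolding X_def by (rule emeasure_ball_scale) (use r L in auto)
  qed
  also have "\<dots> = ennreal (L^DIM('a)) * (\<integral>\<^sup>+i. emeasure lebesgue (ball (fst i) (snd i)) \<partial>count_space C)"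
    by (rule nn_integral_cmult) simp
  finally have b2: "emeasure lebesgue (\<Union>(X ` C)) \<le> ennreal (L^DIM('a)) * (\<integral>\<^sup>+i. emeasure lebesgue (ball (fst i) (snd i)) \<partial>count_space C)" .
  have b3: "(\<integral>\<^sup>+i. emeasure lebesgue (ball (fst i) (snd i)) \<partial>count_space C) = emeasure lebesgue (\<Union>i\<in>C. ball (fst i) (snd i))"
    by (rule emeasure_UN_countable[symmetric]) (use C pw in \<open>auto simp: disjoint_family_on_def pairwise_def disjnt_def\<close>)
  have b4: "emeasure lebesgue (\<Union>i\<in>C. ball (fst i) (snd i)) \<le> emeasure lebesgue U"
    by (rule emeasure_mono) (use C U in \<open>auto simp: K_def\<close>)
  have b5: "emeasure lebesgue (\<Union>i\<in>C. ball (fst i) (snd i)) \<le> emeasure lebesgue E + ennreal e"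
    using b4 EU by (rule order_trans)
  have "emeasure lebesgue B \<le> ennreal (L^DIM('a)) * emeasure lebesgue (\<Union>i\<in>C. ball (fst i) (snd i))"
    using b1 b2 b3 by simp
  also have "\<dots> \<le> ennreal (L^DIM('a)) * (emeasure lebesgue E + ennreal e)"
    by (rule mult_left_mono[OF b5]) simp
  finally show ?thesis .
qed

lemma lip_image_emeasure:
  fixes g :: "'a::euclidean_space \<Rightarrow> 'a"
  assumes L: "L > 0" and lip: "L-lipschitz_on UNIV g" and E: "E \<in> sets lebesgue"
    and B: "B \<subseteq> g ` E"
  shows "emeasure lebesgue B \<le> ennreal (L^DIM('a)) * emeasure lebesgue E"
proof (rule ennreal_le_epsilon)
  fix e :: real assume e: "0 < e"
  have Lp: "L^DIM('a) > 0" using L by simp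
  have "emeasure lebesgue B \<le> ennreal (L^DIM('a)) * (emeasure lebesgue E + ennreal (e / L^DIM('a)))"
    by (rule lip_image_emeasure_eps[OF L lip E B]) (use e Lp in simp)
  also have "\<dots> = ennreal (L^DIM('a)) * emeasure lebesgue E + ennreal (L^DIM('a)) * ennreal (e / L^DIM('a))"
    by (simp add: distrib_left)
  also have "ennreal (L^DIM('a)) * ennreal (e / L^DIM('a)) = ennreal (L^DIM('a) * (e / L^DIM('a)))"
    by (rule ennreal_mult[symmetric]) (use Lp e in auto)
  also have "L^DIM('a) * (e / L^DIM('a)) = e"
    using L by simp
  finally show "emeasure lebesgue B \<le> ennreal (L^DIM('a)) * emeasure lebesgue E + ennreal e" .
qed

theorem theorem10:
  fixes f :: "'a::euclidean_space \<Rightarrow> 'a \<Rightarrow> 'a"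
    and \<phi> :: "'a \<Rightarrow> real"
    and R M Mt Lf :: real and y0 :: 'a
  assumes f_meas: "(\<lambda>(x, z). f x z) \<in> borel_measurable borel"
    and phi_nonneg: "\<And>z. \<phi> z \<ge> 0"
    and phi_int: "integrable lborel \<phi>"
    and phi_one: "(LINT z|lborel. \<phi> z) = 1"
    and R_pos: "R > 0" and M_pos: "M > 0"
    and Lf_nonneg: "Lf \<ge> 0"
    and lip: "\<And>x. x \<in> ball 0 R \<Longrightarrow> Lf-lipschitz_on UNIV (f x)"
    and Mt_pos: "Mt > 0"
    and cover: "\<And>x. x \<in> ball 0 R \<Longrightarrow> ball y0 M \<subseteq> f x ` ball 0 Mt"
    and phi_lsc: "lsc \<phi>"
    and phi_pos: "\<And>z. \<phi> z > 0"
  shows "\<forall>x \<in> ball 0 R. \<forall>A \<in> sets borel.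
           kernelK f \<phi> x A \<ge>
             (1 / Lf ^ DIM('a)) * (INF z \<in> ball 0 Mt. \<phi> z) * measure lborel (A \<inter> ball y0 M)"
proof (intro ballI)
  fix x :: 'a and A :: "'a set" assume x: "x \<in> ball 0 R" and A: "A \<in> sets borel"
  define g where "g = f x"
  define m where "m = (INF z \<in> ball 0 Mt. \<phi> z)"
  have lipg: "Lf-lipschitz_on UNIV g" using lip x g_def by simp
  have gmeas[measurable]: "g \<in> borel_measurable borel"
    by (rule borel_measurable_continuous_onI[OF lipschitz_on_continuous_on[OF lipg]])
  have phimeas[measurable]: "\<phi> \<in> borel_measurable borel"
    using borel_measurable_integrable[OF phi_int] by simp
  have m_nonneg: "m \<ge> 0" unfolding m_def
    by (rule cINF_greatest) (use Mt_pos phi_nonneg in auto)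
  have m_le: "m \<le> \<phi> z" if "z \<in> ball 0 Mt" for z unfolding m_def
    by (rule cINF_lower) (use that phi_nonneg in \<open>auto intro: bdd_belowI[of _ 0]\<close>)
  have K_nonneg: "0 \<le> kernelK f \<phi> x A" unfolding kernelK_def
    by (rule integral_nonneg_AE) (simp add: phi_nonneg)
  show "kernelK f \<phi> x A \<ge> (1 / Lf ^ DIM('a)) * m * measure lborel (A \<inter> ball y0 M)"
  proof (cases "Lf = 0")
    case True
    then show ?thesis using K_nonneg by (simp add: power_0_left)
  next
    case False
    then have Lpos: "Lf > 0" using Lf_nonneg by simp
    have Lp: "Lf^DIM('a) > 0" using Lpos by simp
    define E where "E = ball 0 Mt \<inter> g -` A"
    have Eb: "E \<in> sets borel" unfolding E_def
      using measurable_sets_borel[OF gmeas A] by auto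
    have Efin: "emeasure lborel E < \<infinity>"
      using emeasure_lborel_ball_finite[of 0 Mt] emeasure_mono[of E "ball 0 Mt" lborel]
      by (auto simp: E_def intro: le_less_trans)
    have Bb: "A \<inter> ball y0 M \<in> sets borel" using A by auto
    have Bfin: "emeasure lborel (A \<inter> ball y0 M) < \<infinity>"
      using emeasure_lborel_ball_finite[of y0 M] emeasure_mono[of "A \<inter> ball y0 M" "ball y0 M" lborel]
      by (auto intro: le_less_trans)
    have sub: "A \<inter> ball y0 M \<subseteq> g ` E"
    proof
      fix y assume y: "y \<in> A \<inter> ball y0 M"
      then obtain z where "z \<in> ball 0 Mt" "y = g z" using cover[OF x] unfolding g_def by blast
      then show "y \<in> g ` E" using y by (auto simp: E_def)
    qed
    have "emeasure lebesgue (A \<inter> ball y0 M) \<le> ennreal (Lf^DIM('a)) * emeasure lebesgue E"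
      by (rule lip_image_emeasure[OF Lpos lipg _ sub]) (use Eb in simp)
    then have "emeasure lborel (A \<inter> ball y0 M) \<le> ennreal (Lf^DIM('a)) * emeasure lborel E"
      using Eb Bb by simp
    then have "ennreal (measure lborel (A \<inter> ball y0 M)) \<le> ennreal (Lf^DIM('a) * measure lborel E)"
      using Efin Bfin Lp by (simp add: emeasure_eq_ennreal_measure ennreal_mult)
    then have mE: "measure lborel (A \<inter> ball y0 M) \<le> Lf^DIM('a) * measure lborel E"
      using Lp by (simp add: ennreal_le_iff)
    have intE: "integrable lborel (\<lambda>z. indicator E z * m)"
      using Eb Efin by simp
    have int2: "integrable lborel (\<lambda>z. indicator A (g z) * \<phi> z)"
    proof (rule Bochner_Integration.integrable_bound[OF phi_int])
      show "(\<lambda>z. indicator A (g z) * \<phi> z) \<in> borel_measurable lborel"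
        using A by measurable
      show "AE z in lborel. norm (indicator A (g z) * \<phi> z) \<le> norm (\<phi> z)"
        by (auto simp: phi_nonneg indicator_def)
    qed
    have "(1 / Lf ^ DIM('a)) * m * measure lborel (A \<inter> ball y0 M)
          = m * (measure lborel (A \<inter> ball y0 M) / Lf ^ DIM('a))" by simp
    also have "\<dots> \<le> m * measure lborel E"
      using mE Lp m_nonneg by (intro mult_left_mono) (simp_all add: divide_le_eq mult.commute)
    also have "\<dots> = (LINT z|lborel. indicator E z * m)"
      using Eb by simp
    also have "\<dots> \<le> (LINT z|lborel. indicator A (g z) * \<phi> z)"
      by (rule integral_mono[OF intE int2])
         (auto simp: E_def indicator_def phi_nonneg m_le m_nonneg)
    also have "\<dots> = kernelK f \<phi> x A" by (simp add: kernelK_def g_def)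
    finally show ?thesis .
  qed
qed

end
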